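(* Let $T\in\mathbb{Z}_{>0}$, $\mathcal T=\{0,\dots,T\}$, $\mathcal T_{a:b}=\mathcal T\cap\{a,\dots,b\}$, and let $\boldsymbol\xi=(\xi_0,\dots,\xi_T)$ be a stochastic process with finite support. Let $L\ge 1$, $\alpha\in(0,1)$ and $\Delta:=(\alpha^{1/2}-\alpha)/L$. Then: (a) If a deterministic square matrix $\Phi$ is $(L,\alpha)$-stable and $\|\Phi-\Phi_t(\boldsymbol\xi_{0:t})\|\le\Delta$ a.s. for all $t\in\mathcal T_{1:T}$, then $\{\Phi_t(\boldsymbol\xi_{0:t})\}_{t\in\mathcal T_{1:T}}$ is $(L,\alpha^{1/2})$-stable. (b) If the deterministic pair $(A,B)$ is $(L,\alpha)$-stabilizable, $\|A-A(\xi_t)\|\le\Delta/2$ and $\|B-B(\xi_t)\|\le\Delta/(2L)$ a.s. for $t\in\mathcal T_{1:T}$, then $(\{A(\xi_t)\}_{t\in\mathcal T_{1:T}},\{B(\xi_t)\}_{t\in\mathcal T_{1:T}})$ is $(L,\alpha^{1/2})$-stabilizable. (c) If the deterministic pair $(A,C)$ is $(L,\alpha)$-detectable, $\|A-A(\xi_t)\|\le\Delta/2$ a.s. for $t\in\mathcal T_{1:T}$ and $\|C-C(\xi_t)\|\le\Delta/(2L)$ a.s. for $t\in\mathcal T_{0:T-1}$, then $(\{A(\xi_t)\}_{t\in\mathcal T_{1:T}},\{C(\xi_t)\}_{t\in\mathcal T_{0:T-1}})$ is $(L,\alpha^{1/2})$-detectable.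
   Context: $\|\cdot\|$ is the Euclidean norm / induced 2-norm. $\boldsymbol\xi_{a:b}=(\xi_a,\dots,\xi_b)$. $A(\cdot),B(\cdot),C(\cdot)$ are matrix-valued functions of $\xi_t$; $\Phi_t(\cdot)$ is a square-matrix-valued function of $\boldsymbol\xi_{0:t}$. Deterministic notions (for $L>0,\alpha\in(0,1)$): a square matrix $\Phi$ is $(L,\alpha)$-stable if $\|\Phi^t\|\le L\alpha^t$ for all integers $t\ge0$; $(A,B)$ is $(L,\alpha)$-stabilizable if there is $K$ with $\|K\|\le L$ such that $A-BK$ is $(L,\alpha)$-stable; $(A,C)$ is $(L,\alpha)$-detectable if there is $K$ with $\|K\|\le L$ such that $A-KC$ is $(L,\alpha)$-stable. Stochastic notions: $\{\Phi_t(\boldsymbol\xi_{0:t})\}_{t\in\mathcal T_{1:T}}$ is $(L,\alpha)$-stable if $\|\Phi_{t''}(\boldsymbol\xi_{0:t''})\cdots\Phi_{t'+1}(\boldsymbol\xi_{0:t'+1})\|\le L\alpha^{t''-t'}$ a.s. for all $t'<t''$ in $\mathcal T$. $(\{A(\xi_t)\}_{t\in\mathcal T_{1:T}},\{B(\xi_t)\}_{t\in\mathcal T_{1:T}})$ is $(L,\alpha)$-stabilizable if there exist matrices $K_t(\boldsymbol\xi_{0:t})$, $t\in\mathcal T_{0:T-1}$ (functions of $\boldsymbol\xi_{0:t}$ only), with $\|K_t\|\le L$ a.s., such that $\{A(\xi_t)-B(\xi_t)K_{t-1}(\boldsymbol\xi_{0:t-1})\}_{t\in\mathcal T_{1:T}}$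 is $(L,\alpha)$-stable. $(\{A(\xi_t)\}_{t\in\mathcal T_{1:T}},\{C(\xi_t)\}_{t\in\mathcal T_{0:T-1}})$ is $(L,\alpha)$-detectable if there exist $K_t(\boldsymbol\xi_{0:t})$, $t\in\mathcal T_{1:T}$, with $\|K_t\|\le L$ a.s., such that $\{A(\xi_t)-K_t(\boldsymbol\xi_{0:t})C(\xi_{t-1})\}_{t\in\mathcal T_{1:T}}$ is $(L,\alpha)$-stable. *)

theory Defs
  imports "HOL-Analysis.Analysis" "HOL-Probability.Probability"
begin

definition opnorm :: "real^'n^'m \<Rightarrow> real" where
  "opnorm A = onorm (\<lambda>x. A *v x)"

definition matpow :: "real^'n^'n \<Rightarrow> nat \<Rightarrow> real^'n^'n" where
  "matpow Phi k = (((**) Phi) ^^ k) (mat 1)"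

text \<open>Ordered product  f b ** f (b-1) ** ... ** f (a+1)  (identity if b \<le> a).\<close>
definition mprod :: "(nat \<Rightarrow> real^'n^'n) \<Rightarrow> nat \<Rightarrow> nat \<Rightarrow> real^'n^'n" where
  "mprod f a b = fold (\<lambda>k acc. f k ** acc) [Suc a..<Suc b] (mat 1)"

definition det_stable :: "real^'n^'n \<Rightarrow> real \<Rightarrow> real \<Rightarrow> bool" where
  "det_stable Phi L \<alpha> \<longleftrightarrow> (\<forall>t::nat. opnorm (matpow Phi t) \<le> L * \<alpha> ^ t)"

definition det_stabilizable :: "real^'n^'n \<Rightarrow> real^'m^'n \<Rightarrow> real \<Rightarrow> real \<Rightarrow> bool" where
  "det_stabilizable A B L \<alpha> \<longleftrightarrow>
     (\<exists>K :: real^'n^'m. opnorm K \<le> L \<and> det_stable (A - B ** K) L \<alpha>)"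

definition det_detectable :: "real^'n^'n \<Rightarrow> real^'n^'p \<Rightarrow> real \<Rightarrow> real \<Rightarrow> bool" where
  "det_detectable A C L \<alpha> \<longleftrightarrow>
     (\<exists>K :: real^'p^'n. opnorm K \<le> L \<and> det_stable (A - K ** C) L \<alpha>)"

text \<open>The process \<xi> = (\<xi>_0,...,\<xi>_T) is a random list
  of length T+1 distributed according to the pmf p; \<xi>_t = xs ! t and
  \<xi>_{0:t} = take (Suc t) xs.  A matrix-valued function of \<xi>_{0:t} is a
  function \<Phi> t applied to the prefix take (Suc t) xs.\<close>
definition stoch_stable ::
  "'x list pmf \<Rightarrow> nat \<Rightarrow> (nat \<Rightarrow> 'x list \<Rightarrow> real^'n^'n) \<Rightarrow> real \<Rightarrow> real \<Rightarrow> bool" where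
  "stoch_stable p T Phi L \<alpha> \<longleftrightarrow>
     (\<forall>t1 t2. t1 < t2 \<and> t2 \<le> T \<longrightarrow>
        (AE xs in measure_pmf p.
           opnorm (mprod (\<lambda>k. Phi k (take (Suc k) xs)) t1 t2) \<le> L * \<alpha> ^ (t2 - t1)))"

definition stoch_stabilizable ::
  "'x list pmf \<Rightarrow> nat \<Rightarrow> ('x \<Rightarrow> real^'n^'n) \<Rightarrow> ('x \<Rightarrow> real^'m^'n) \<Rightarrow> real \<Rightarrow> real \<Rightarrow> bool" where
  "stoch_stabilizable p T A B L \<alpha> \<longleftrightarrow>
     (\<exists>K :: nat \<Rightarrow> 'x list \<Rightarrow> real^'n^'m.
        (\<forall>t. t \<le> T - 1 \<longrightarrow> (AE xs in measure_pmf p. opnorm (K t (take (Suc t) xs)) \<le> L)) \<and>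
        stoch_stable p T (\<lambda>t ys. A (ys ! t) - B (ys ! t) ** K (t - 1) (take t ys)) L \<alpha>)"

definition stoch_detectable ::
  "'x list pmf \<Rightarrow> nat \<Rightarrow> ('x \<Rightarrow> real^'n^'n) \<Rightarrow> ('x \<Rightarrow> real^'n^'p) \<Rightarrow> real \<Rightarrow> real \<Rightarrow> bool" where
  "stoch_detectable p T A C L \<alpha> \<longleftrightarrow>
     (\<exists>K :: nat \<Rightarrow> 'x list \<Rightarrow> real^'p^'n.
        (\<forall>t. 1 \<le> t \<and> t \<le> T \<longrightarrow> (AE xs in measure_pmf p. opnorm (K t (take (Suc t) xs)) \<le> L)) \<and>
        stoch_stable p T (\<lambda>t ys. A (ys ! t) - K t ys ** C (ys ! (t - 1))) L \<alpha>)"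

end

theory Submission
  imports Defs
begin
lemma bl: "bounded_linear (\<lambda>x. (X::real^'n^'m) *v x)"
  by (simp add: linear_conv_bounded_linear matrix_vector_mul_linear)
lemma opnorm_mult: "opnorm ((X::real^'n^'m) ** Y) \<le> opnorm X * opnorm Y"
proof -
  have "(\<lambda>x. (X ** Y) *v x) = (\<lambda>x. X *v x) o (\<lambda>x. Y *v x)"
    by (auto simp: matrix_vector_mul_assoc)
  thus ?thesis unfolding opnorm_def using onorm_compose[OF bl bl] by simp
qed
lemma opnorm_add: "opnorm ((X::real^'n^'m) + Y) \<le> opnorm X + opnorm Y"
proof -
  have "(\<lambda>x. (X + Y) *v x) = (\<lambda>x. X *v x + Y *v x)"
    by (auto simp: matrix_vector_mult_add_rdistrib)
  thus ?thesis unfolding opnorm_def using onorm_triangle[OF bl bl] by simp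
qed
lemma opnorm_diff: "opnorm ((X::real^'n^'m) - Y) \<le> opnorm X + opnorm Y"
proof -
  have "(\<lambda>x. (X - Y) *v x) = (\<lambda>x. X *v x - Y *v x)"
    by (auto simp: matrix_vector_mult_diff_rdistrib)
  moreover have "onorm (\<lambda>x. X *v x - Y *v x) \<le> onorm (\<lambda>x. X *v x) + onorm (\<lambda>x. - (Y *v x))"
    using onorm_triangle[OF bl bounded_linear_minus[OF bl]] by simp
  ultimately show ?thesis unfolding opnorm_def using onorm_neg[of "\<lambda>x. Y *v x"] by simp
qed
lemma opnorm_nonneg: "0 \<le> opnorm (X::real^'n^'m)"
  unfolding opnorm_def by (rule onorm_pos_le[OF bl])
lemma opnorm_commute: "opnorm ((X::real^'n^'m) - Y) = opnorm (Y - X)"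
proof -
  have "(\<lambda>x. (Y - X) *v x) = (\<lambda>x. - ((X - Y) *v x))"
    by (auto simp: matrix_vector_mult_diff_rdistrib)
  thus ?thesis unfolding opnorm_def using onorm_neg[of "\<lambda>x. (X - Y) *v x"] by simp
qed

lemma matrix_add_rdistrib': "((A::real^'n^'m) + B) ** C = (A ** C) + (B ** C)"
  by (vector matrix_matrix_mult_def sum.distrib[symmetric] field_simps)

lemma matpow_Suc: "matpow P (Suc j) = P ** matpow P j"
  by (simp add: matpow_def)
lemma matpow_Suc2: "matpow P j ** P = matpow P (Suc j)"
proof (induction j)
  case 0 then show ?case by (simp add: matpow_def)
next
  case (Suc j)
  have "matpow P (Suc j) ** P = P ** (matpow P j ** P)" by (simp add: matpow_Suc matrix_mul_assoc)
  also have "\<dots> = matpow P (Suc (Suc j))" using Suc by (simp add: matpow_Suc)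
  finally show ?case .
qed

lemma mprod_0: "mprod f a a = mat 1" by (simp add: mprod_def)
lemma mprod_Suc: "mprod f a (Suc (a + k)) = f (Suc (a+k)) ** mprod f a (a+k)"
  by (simp add: mprod_def)

lemma key:
  fixes P :: "real^'n^'n" and f :: "nat \<Rightarrow> real^'n^'n"
  assumes st: "det_stable P L \<alpha>" and L: "L \<ge> 0" and a0: "\<alpha> \<ge> 0" and b0: "\<beta> \<ge> 0"
    and D: "\<alpha> + L * \<Delta> = \<beta>"
    and E: "\<And>i. a < i \<Longrightarrow> i \<le> a + n \<Longrightarrow> opnorm (P - f i) \<le> \<Delta>"
  shows "k \<le> n \<Longrightarrow> opnorm (matpow P j ** mprod f a (a+k)) \<le> L * \<alpha>^j * \<beta>^k"
proof (induction k arbitrary: j)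
  case 0
  then show ?case using st by (simp add: mprod_0 det_stable_def)
next
  case (Suc k)
  let ?M = "mprod f a (a+k)"
  have IH: "\<And>j. opnorm (matpow P j ** ?M) \<le> L * \<alpha>^j * \<beta>^k" using Suc by simp
  have M: "opnorm ?M \<le> L * \<beta>^k" using IH[of 0] by (simp add: matpow_def)
  have e: "opnorm (f (Suc (a+k)) - P) \<le> \<Delta>" proof -
    have "opnorm (P - f (Suc (a+k))) \<le> \<Delta>" using E[of "Suc (a+k)"] Suc.prems by simp
    thus ?thesis using opnorm_commute[of P] by simp
  qed
  have eq: "matpow P j ** mprod f a (a + Suc k) = matpow P (Suc j) ** ?M + matpow P j ** ((f (Suc (a+k)) - P) ** ?M)"
  proof -
    have "matpow P j ** mprod f a (a + Suc k) = matpow P j ** ((P + (f (Suc (a+k)) - P)) ** ?M)"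
      by (simp add: mprod_Suc)
    also have "\<dots> = (matpow P j ** P) ** ?M + matpow P j ** ((f (Suc (a+k)) - P) ** ?M)"
      by (simp only: matrix_add_rdistrib' matrix_add_ldistrib matrix_mul_assoc)
    finally show ?thesis by (simp add: matpow_Suc2)
  qed
  have pj: "opnorm (matpow P j) \<le> L * \<alpha>^j" using st by (simp add: det_stable_def)
  have "opnorm (matpow P j ** ((f (Suc (a+k)) - P) ** ?M)) \<le> opnorm (matpow P j) * (opnorm (f (Suc (a+k)) - P) * opnorm ?M)"
    by (meson opnorm_mult opnorm_nonneg mult_left_mono order_trans)
  also have "\<dots> \<le> (L * \<alpha>^j) * (\<Delta> * (L * \<beta>^k))"
    by (intro mult_mono pj e M opnorm_nonneg mult_nonneg_nonneg) (use L b0 a0 order_trans[OF opnorm_nonneg e] in auto)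
  finally have t2: "opnorm (matpow P j ** ((f (Suc (a+k)) - P) ** ?M)) \<le> L * \<alpha>^j * (L * \<Delta>) * \<beta>^k"
    by (simp add: algebra_simps)
  have "opnorm (matpow P j ** mprod f a (a + Suc k)) \<le> L * \<alpha>^(Suc j) * \<beta>^k + L * \<alpha>^j * (L * \<Delta>) * \<beta>^k"
    using eq opnorm_add IH[of "Suc j"] t2 by (smt (verit))
  also have "\<dots> = L * \<alpha>^j * \<beta>^(Suc k)" using D[symmetric] by (simp add: algebra_simps)
  finally show ?case .
qed
lemma matrix_sub_rdistrib': "((A::real^'n^'m) - B) ** C = (A ** C) - (B ** C)"
  by (vector matrix_matrix_mult_def sum_subtractf[symmetric] field_simps)
lemma matrix_sub_ldistrib': "(A::real^'n^'m) ** (B - C) = (A ** B) - (A ** C)"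
  by (vector matrix_matrix_mult_def sum_subtractf[symmetric] field_simps)

lemma partA:
  fixes P :: "real^'n^'n" and Phit :: "nat \<Rightarrow> 'x list \<Rightarrow> real^'n^'n"
  assumes st: "det_stable P L \<alpha>" and L: "L \<ge> 1" and a0: "0 < \<alpha>"
    and H: "\<forall>t. 1 \<le> t \<and> t \<le> T \<longrightarrow>
         (AE xs in measure_pmf p. opnorm (P - Phit t (take (Suc t) xs)) \<le> (sqrt \<alpha> - \<alpha>) / L)"
  shows "stoch_stable p T Phit L (sqrt \<alpha>)"
  unfolding stoch_stable_def
proof (intro allI impI)
  fix t1 t2 :: nat assume tt: "t1 < t2 \<and> t2 \<le> T"
  show "AE xs in measure_pmf p. opnorm (mprod (\<lambda>k. Phit k (take (Suc k) xs)) t1 t2) \<le> L * sqrt \<alpha> ^ (t2 - t1)"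
    unfolding AE_measure_pmf_iff
  proof
    fix xs assume xs: "xs \<in> set_pmf p"
    let ?f = "\<lambda>k. Phit k (take (Suc k) xs)"
    have E: "opnorm (P - ?f i) \<le> (sqrt \<alpha> - \<alpha>) / L" if "t1 < i" "i \<le> t1 + (t2 - t1)" for i
    proof -
      have "1 \<le> i \<and> i \<le> T" using that tt by auto
      then have "AE xs in measure_pmf p. opnorm (P - Phit i (take (Suc i) xs)) \<le> (sqrt \<alpha> - \<alpha>) / L"
        using H by blast
      then show ?thesis unfolding AE_measure_pmf_iff using xs by blast
    qed
    have D: "\<alpha> + L * ((sqrt \<alpha> - \<alpha>) / L) = sqrt \<alpha>" using L by simp
    have "opnorm (matpow P 0 ** mprod ?f t1 (t1 + (t2 - t1))) \<le> L * \<alpha>^0 * sqrt \<alpha> ^ (t2 - t1)"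
      by (rule key[OF st _ _ _ D E]) (use L a0 in auto)
    then show "opnorm (mprod ?f t1 t2) \<le> L * sqrt \<alpha> ^ (t2 - t1)"
      using tt by (simp add: matpow_def)
  qed
qed
lemma pert_bound:
  fixes Z :: "real^'c^'d" and W :: "real^'e^'f"
  shows "opnorm Z \<le> d / (2 * L) \<Longrightarrow> opnorm W \<le> L \<Longrightarrow> L \<ge> 1
     \<Longrightarrow> opnorm Z * opnorm W \<le> d / 2"
proof -
  assume z: "opnorm Z \<le> d / (2 * L)" and w: "opnorm W \<le> L" and L: "L \<ge> 1"
  have "opnorm Z * opnorm W \<le> d / (2 * L) * L"
    by (intro mult_mono z w opnorm_nonneg) (use z opnorm_nonneg[of Z] in linarith)
  also have "\<dots> = d / 2" using L by (simp add: field_simps)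
  finally show ?thesis .
qed
theorem proposition1:
  fixes p :: "'x list pmf" and T :: nat and L \<alpha> :: real
    and Phi :: "real^'n^'n" and Phit :: "nat \<Rightarrow> 'x list \<Rightarrow> real^'n^'n"
    and A :: "real^'n^'n" and B :: "real^'m^'n" and C :: "real^'n^'q"
    and Ax :: "'x \<Rightarrow> real^'n^'n" and Bx :: "'x \<Rightarrow> real^'m^'n" and Cx :: "'x \<Rightarrow> real^'n^'q"
  assumes T_pos: "T > 0"
    and fin: "finite (set_pmf p)"
    and len: "\<forall>xs\<in>set_pmf p. length xs = Suc T"
    and L_ge: "L \<ge> 1"
    and \<alpha>_pos: "0 < \<alpha>" and \<alpha>_lt: "\<alpha> < 1"
  shows
    "(det_stable Phi L \<alpha> \<and>
      (\<forall>t. 1 \<le> t \<and> t \<le> T \<longrightarrow>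
         (AE xs in measure_pmf p. opnorm (Phi - Phit t (take (Suc t) xs)) \<le> (sqrt \<alpha> - \<alpha>) / L))
      \<longrightarrow> stoch_stable p T Phit L (sqrt \<alpha>))
   \<and> (det_stabilizable A B L \<alpha> \<and>
      (\<forall>t. 1 \<le> t \<and> t \<le> T \<longrightarrow>
         (AE xs in measure_pmf p. opnorm (A - Ax (xs ! t)) \<le> ((sqrt \<alpha> - \<alpha>) / L) / 2)) \<and>
      (\<forall>t. 1 \<le> t \<and> t \<le> T \<longrightarrow>
         (AE xs in measure_pmf p. opnorm (B - Bx (xs ! t)) \<le> ((sqrt \<alpha> - \<alpha>) / L) / (2 * L)))
      \<longrightarrow> stoch_stabilizable p T Ax Bx L (sqrt \<alpha>))
   \<and> (det_detectable A C L \<alpha> \<and>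
      (\<forall>t. 1 \<le> t \<and> t \<le> T \<longrightarrow>
         (AE xs in measure_pmf p. opnorm (A - Ax (xs ! t)) \<le> ((sqrt \<alpha> - \<alpha>) / L) / 2)) \<and>
      (\<forall>t. t \<le> T - 1 \<longrightarrow>
         (AE xs in measure_pmf p. opnorm (C - Cx (xs ! t)) \<le> ((sqrt \<alpha> - \<alpha>) / L) / (2 * L)))
      \<longrightarrow> stoch_detectable p T Ax Cx L (sqrt \<alpha>))"
proof (intro conjI impI)
  assume "det_stable Phi L \<alpha> \<and>
      (\<forall>t. 1 \<le> t \<and> t \<le> T \<longrightarrow>
         (AE xs in measure_pmf p. opnorm (Phi - Phit t (take (Suc t) xs)) \<le> (sqrt \<alpha> - \<alpha>) / L))"
  then show "stoch_stable p T Phit L (sqrt \<alpha>)" using partA L_ge \<alpha>_pos by blast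
next
  assume h: "det_stabilizable A B L \<alpha> \<and>
      (\<forall>t. 1 \<le> t \<and> t \<le> T \<longrightarrow>
         (AE xs in measure_pmf p. opnorm (A - Ax (xs ! t)) \<le> ((sqrt \<alpha> - \<alpha>) / L) / 2)) \<and>
      (\<forall>t. 1 \<le> t \<and> t \<le> T \<longrightarrow>
         (AE xs in measure_pmf p. opnorm (B - Bx (xs ! t)) \<le> ((sqrt \<alpha> - \<alpha>) / L) / (2 * L)))"
  then obtain K where K: "opnorm K \<le> L" "det_stable (A - B ** K) L \<alpha>"
    unfolding det_stabilizable_def by blast
  have H: "\<forall>t. 1 \<le> t \<and> t \<le> T \<longrightarrow> (AE xs in measure_pmf p.
      opnorm ((A - B ** K) - (\<lambda>t ys. Ax (ys ! t) - Bx (ys ! t) ** K) t (take (Suc t) xs)) \<le> (sqrt \<alpha> - \<alpha>) / L)"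
  proof (intro allI impI)
    fix t assume t: "1 \<le> t \<and> t \<le> T"
    have a: "\<forall>xs\<in>set_pmf p. opnorm (A - Ax (xs ! t)) \<le> ((sqrt \<alpha> - \<alpha>) / L) / 2"
      using h t unfolding AE_measure_pmf_iff by blast
    have b: "\<forall>xs\<in>set_pmf p. opnorm (B - Bx (xs ! t)) \<le> ((sqrt \<alpha> - \<alpha>) / L) / (2 * L)"
      using h t unfolding AE_measure_pmf_iff by blast
    show "AE xs in measure_pmf p.
      opnorm ((A - B ** K) - (\<lambda>t ys. Ax (ys ! t) - Bx (ys ! t) ** K) t (take (Suc t) xs)) \<le> (sqrt \<alpha> - \<alpha>) / L"
      unfolding AE_measure_pmf_iff
    proof
      fix xs assume xs: "xs \<in> set_pmf p"
      have eq: "(A - B ** K) - (Ax (xs ! t) - Bx (xs ! t) ** K) = (A - Ax (xs ! t)) - (B - Bx (xs ! t)) ** K"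
        by (simp add: matrix_sub_rdistrib' algebra_simps)
      have "opnorm ((A - Ax (xs ! t)) - (B - Bx (xs ! t)) ** K) \<le> opnorm (A - Ax (xs ! t)) + opnorm (B - Bx (xs ! t)) * opnorm K"
        using opnorm_diff opnorm_mult by (smt (verit))
      also have "\<dots> \<le> (sqrt \<alpha> - \<alpha>) / L"
        using a b xs K(1) pert_bound[of "B - Bx (xs ! t)" "(sqrt \<alpha> - \<alpha>) / L" L K] L_ge by force
      finally show "opnorm ((A - B ** K) - (\<lambda>t ys. Ax (ys ! t) - Bx (ys ! t) ** K) t (take (Suc t) xs)) \<le> (sqrt \<alpha> - \<alpha>) / L"
        using eq by (simp only: nth_take lessI)
    qed
  qed
  have S: "stoch_stable p T (\<lambda>t ys. Ax (ys ! t) - Bx (ys ! t) ** K) L (sqrt \<alpha>)"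
    by (rule partA[OF K(2) L_ge \<alpha>_pos H])
  show "stoch_stabilizable p T Ax Bx L (sqrt \<alpha>)"
    unfolding stoch_stabilizable_def
    by (rule exI[of _ "\<lambda>t ys. K"]) (use S K(1) in simp)
next
  assume h: "det_detectable A C L \<alpha> \<and>
      (\<forall>t. 1 \<le> t \<and> t \<le> T \<longrightarrow>
         (AE xs in measure_pmf p. opnorm (A - Ax (xs ! t)) \<le> ((sqrt \<alpha> - \<alpha>) / L) / 2)) \<and>
      (\<forall>t. t \<le> T - 1 \<longrightarrow>
         (AE xs in measure_pmf p. opnorm (C - Cx (xs ! t)) \<le> ((sqrt \<alpha> - \<alpha>) / L) / (2 * L)))"
  then obtain K where K: "opnorm K \<le> L" "det_stable (A - K ** C) L \<alpha>"
    unfolding det_detectable_def by blast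
  have H: "\<forall>t. 1 \<le> t \<and> t \<le> T \<longrightarrow> (AE xs in measure_pmf p.
      opnorm ((A - K ** C) - (\<lambda>t ys. Ax (ys ! t) - K ** Cx (ys ! (t - 1))) t (take (Suc t) xs)) \<le> (sqrt \<alpha> - \<alpha>) / L)"
  proof (intro allI impI)
    fix t assume t: "1 \<le> t \<and> t \<le> T"
    have a: "\<forall>xs\<in>set_pmf p. opnorm (A - Ax (xs ! t)) \<le> ((sqrt \<alpha> - \<alpha>) / L) / 2"
      using h t unfolding AE_measure_pmf_iff by blast
    have t1: "t - 1 \<le> T - 1" using t by linarith
    have b: "\<forall>xs\<in>set_pmf p. opnorm (C - Cx (xs ! (t - 1))) \<le> ((sqrt \<alpha> - \<alpha>) / L) / (2 * L)"
      using h t1 unfolding AE_measure_pmf_iff by blast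
    show "AE xs in measure_pmf p.
      opnorm ((A - K ** C) - (\<lambda>t ys. Ax (ys ! t) - K ** Cx (ys ! (t - 1))) t (take (Suc t) xs)) \<le> (sqrt \<alpha> - \<alpha>) / L"
      unfolding AE_measure_pmf_iff
    proof
      fix xs assume xs: "xs \<in> set_pmf p"
      have eq: "(A - K ** C) - (Ax (xs ! t) - K ** Cx (xs ! (t - 1))) = (A - Ax (xs ! t)) - K ** (C - Cx (xs ! (t - 1)))"
        by (simp add: matrix_sub_ldistrib' algebra_simps)
      have "opnorm ((A - Ax (xs ! t)) - K ** (C - Cx (xs ! (t - 1)))) \<le> opnorm (A - Ax (xs ! t)) + opnorm (C - Cx (xs ! (t - 1))) * opnorm K"
        using opnorm_diff opnorm_mult by (smt (verit) mult.commute)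
      also have "\<dots> \<le> (sqrt \<alpha> - \<alpha>) / L"
        using a b xs K(1) pert_bound[of "C - Cx (xs ! (t - 1))" "(sqrt \<alpha> - \<alpha>) / L" L K] L_ge by force
      finally show "opnorm ((A - K ** C) - (\<lambda>t ys. Ax (ys ! t) - K ** Cx (ys ! (t - 1))) t (take (Suc t) xs)) \<le> (sqrt \<alpha> - \<alpha>) / L"
        using eq t by (simp only: nth_take lessI diff_less_Suc)
    qed
  qed
  have S: "stoch_stable p T (\<lambda>t ys. Ax (ys ! t) - K ** Cx (ys ! (t - 1))) L (sqrt \<alpha>)"
    by (rule partA[OF K(2) L_ge \<alpha>_pos H])
  show "stoch_detectable p T Ax Cx L (sqrt \<alpha>)"
    unfolding stoch_detectable_def
    by (rule exI[of _ "\<lambda>t ys. K"]) (use S K(1) in simp)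
qed

end
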